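(* Let $q>3$ be an odd prime power, let $f(x)=x^2$ on $\mathbb F_{q^2}$, and let $\theta\in\mathbb F_{q^2}^*$ be such that $\theta^{q+1}$ is a nonsquare in $\mathbb F_q$. Then in the unital $\mathcal U_\theta:=\{(x,t\theta):x\in\mathbb F_{q^2},t\in\mathbb F_q\}\cup\{(\infty)\}$ of $\Pi(f)$, the point $(\infty)$ is the unique vertex of Wilbrink's condition II in strong form.
   Context: $\Pi(f)$ for $f(x)=x^2$ is the projective plane with points $(x,y)\in\mathbb F_{q^2}^2$ and $(a)$ for $a\in\mathbb F_{q^2}\cup\{\infty\}$, lines $L_{a,b}=\{(x,f(x+a)-b):x\in\mathbb F_{q^2}\}\cup\{(a)\}$, $N_a=\{(a,y):y\in\mathbb F_{q^2}\}\cup\{(\infty)\}$ ($a,b\in\mathbb F_{q^2}$), $L_\infty=\{(a):a\in\mathbb F_{q^2}\cup\{\infty\}\}$. A unital (set of $q^3+1$ points meeting every line in $1$ or $q+1$ points) is regarded as a design whose blocks are its intersections with lines meeting it in $q+1$ points. A point $v$ of the unital is a vertex of Wilbrink's condition II in strong form if for every block $B$ with $v\notin B$, every block $C$ with $v\in C$ meeting $B$, and every point $w\in C$ distinct from $v$ and from the point of $B\cap C$, there exists a block $B'\neq C$ with $w\in B'$ such that $B'$ meets every block that contains $v$ and meets $B$. *)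

theory Defs
  imports Main "HOL-Computational_Algebra.Primes"
begin

text \<open>Points of the plane Pi(f) over a field 'a (intended: GF(q^2)):
  affine points (x,y), and points at infinity (a) with a in 'a, or (infinity),
  represented by Inf (Some a) and Inf None respectively.\<close>

datatype 'a pt = Aff 'a 'a | Inf "'a option"

definition lineL :: "('a \<Rightarrow> 'a) \<Rightarrow> 'a::field \<Rightarrow> 'a \<Rightarrow> 'a pt set" where
  "lineL f a b = {Aff x (f (x + a) - b) | x. True} \<union> {Inf (Some a)}"

definition lineN :: "'a \<Rightarrow> 'a pt set" where
  "lineN a = {Aff a y | y. True} \<union> {Inf None}"

definition lineInf :: "'a pt set" where
  "lineInf = {Inf z | z. True}"

definition lines :: "('a \<Rightarrow> 'a) \<Rightarrow> 'a::field pt set set" where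
  "lines f = {lineL f a b | a b. True} \<union> {lineN a | a. True} \<union> {lineInf}"

definition blocks :: "('a \<Rightarrow> 'a) \<Rightarrow> nat \<Rightarrow> 'a::field pt set \<Rightarrow> 'a pt set set" where
  "blocks f q U = {U \<inter> l | l. l \<in> lines f \<and> card (U \<inter> l) = q + 1}"

definition strong_II_vertex ::
  "('a \<Rightarrow> 'a) \<Rightarrow> nat \<Rightarrow> 'a::field pt set \<Rightarrow> 'a pt \<Rightarrow> bool" where
  "strong_II_vertex f q U v \<longleftrightarrow> v \<in> U \<and>
     (\<forall>B \<in> blocks f q U. \<forall>C \<in> blocks f q U. \<forall>w \<in> C.
        v \<notin> B \<longrightarrow> v \<in> C \<longrightarrow> B \<inter> C \<noteq> {} \<longrightarrow> w \<noteq> v \<longrightarrow> w \<notin> B \<longrightarrow>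
        (\<exists>B' \<in> blocks f q U. B' \<noteq> C \<and> w \<in> B' \<and>
           (\<forall>D \<in> blocks f q U. v \<in> D \<longrightarrow> D \<inter> B \<noteq> {} \<longrightarrow> B' \<inter> D \<noteq> {})))"

text \<open>The set U_theta, with F_q = {t. t^q = t} the subfield of order q.\<close>

definition U_theta :: "nat \<Rightarrow> 'a::field \<Rightarrow> 'a pt set" where
  "U_theta q \<theta> = {Aff x (t * \<theta>) | x t. t ^ q = t} \<union> {Inf None}"

end

theory Submission
  imports Defs "HOL-Number_Theory.Residues" "HOL-Computational_Algebra.Polynomial"
begin

locale ufld =
  fixes q p kk :: nat and th :: "'a::{field,finite}"
  assumes pp: "prime p" and kk1: "kk \<ge> 1" and qdef: "q = p ^ kk"
    and qodd: "odd q" and q3: "q > 3"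
    and card: "card (UNIV :: 'a set) = q ^ 2"
    and thnz: "th \<noteq> 0"
    and nsq: "\<not> (\<exists>s::'a. s ^ q = s \<and> s ^ 2 = th ^ (q + 1))"
begin

lemma pow_card: "(x::'a) ^ (q^2) = x"
proof (cases "x = 0")
  case False
  have cpos: "card (UNIV :: 'a set) > 0" by (simp add: finite_UNIV_card_ge_0)
  have "x * (\<Prod>y\<in>UNIV-{0}. x * y) = x * x ^ (card (UNIV :: 'a set) - 1) * \<Prod>(UNIV-{0::'a})"
    by (simp add: prod.distrib mult_ac)
  also have "x * x ^ (card (UNIV :: 'a set) - 1) = x ^ Suc (card (UNIV :: 'a set) - 1)"
    by (subst power_Suc) auto
  also have "Suc (card (UNIV :: 'a set) - 1) = card (UNIV :: 'a set)"
    using cpos by simp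
  also have "(\<Prod>y\<in>UNIV-{0}. x * y) = (\<Prod>y\<in>UNIV-{0::'a}. y)"
    by (rule prod.reindex_bij_witness[of _ "\<lambda>y. y / x" "\<lambda>y. x * y"]) (use False in auto)
  finally show ?thesis using card
    by simp
next
  case True thus ?thesis using q3 by simp
qed

lemma char_p: "CHAR('a) = p"
proof -
  have "CHAR('a) dvd card (UNIV :: 'a set)" by (rule CHAR_dvd_CARD)
  hence d: "CHAR('a) dvd p ^ (2*kk)" using card qdef by (simp add: power_mult[symmetric] mult.commute)
  have pos: "CHAR('a) > 0" by (simp add: finite_imp_CHAR_pos)
  hence pr: "prime CHAR('a)" using prime_CHAR_semidom by blast
  hence "CHAR('a) dvd p" using d prime_dvd_power by blast
  thus ?thesis using pr pp by (simp add: primes_dvd_imp_eq)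
qed

lemma frob_add: "((x::'a) + y) ^ q = x ^ q + y ^ q"
  by (rule freshmans_dream') (use char_p pp qdef in auto)

lemma frob_neg: "(- (x::'a)) ^ q = - (x ^ q)"
  using qodd by (simp add: power_minus_odd)

lemma frob_diff: "((x::'a) - y) ^ q = x ^ q - y ^ q"
  using frob_add[of x "-y"] frob_neg[of y] by simp

lemma two_nz: "(2::'a) \<noteq> 0"
proof
  assume "(2::'a) = 0"
  hence "of_nat 2 = (0::'a)" by simp
  hence "p dvd 2" using of_nat_eq_0_iff_char_dvd char_p by metis
  hence "p = 2" using pp by (metis prime_nat_iff two_is_prime_nat primes_dvd_imp_eq)
  thus False using qodd qdef kk1 by simp
qed

lemma frob_frob: "((x::'a) ^ q) ^ q = x"
  using pow_card[of x] by (simp add: power_mult[symmetric] power2_eq_square)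

end


lemma card_fibres_le:
  fixes f :: "'b \<Rightarrow> 'c"
  assumes "finite A" "\<And>c. card {x\<in>A. f x = c} \<le> n"
  shows "card A \<le> card (f ` A) * n"
proof -
  have e: "A = (\<Union>c\<in>f ` A. {x\<in>A. f x = c})" by auto
  have fin: "finite (f ` A)" using assms(1) by simp
  have "card A = card (\<Union>c\<in>f ` A. {x\<in>A. f x = c})" using e by (rule arg_cong)
  also have "\<dots> \<le> (\<Sum>c\<in>f ` A. card {x\<in>A. f x = c})"
    by (rule card_UN_le[OF fin])
  also have "\<dots> \<le> (\<Sum>c\<in>f ` A. n)" by (rule sum_mono) (rule assms(2))
  finally show ?thesis by simp
qed

lemma card_roots_le:
  fixes P :: "'a::field \<Rightarrow> bool"
  assumes "pl \<noteq> 0" "\<And>x. P x \<longleftrightarrow> poly pl x = 0" "degree pl \<le> n"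
  shows "card {x. P x} \<le> n"
proof -
  have "{x. P x} = {x. poly pl x = 0}" using assms(2) by auto
  thus ?thesis using card_poly_roots_bound[OF assms(1)] assms(3) by simp
qed

context ufld begin

lemma q2: "q \<ge> 2" using q3 by simp

lemma K_roots: "card {x::'a. x ^ q = x} \<le> q"
proof (rule card_roots_le[where pl = "monom 1 q + [:0,-1:]"])
  have d: "degree (monom (1::'a) q + [:0,-1:]) = q"
    using q2 by (subst degree_add_eq_left) (auto simp: degree_monom_eq)
  thus "monom (1::'a) q + [:0,-1:] \<noteq> 0" using q2 by auto
  show "degree (monom (1::'a) q + [:0,-1:]) \<le> q" using d by simp
  fix x :: 'a show "x ^ q = x \<longleftrightarrow> poly (monom 1 q + [:0,-1:]) x = 0"
    by (simp add: poly_monom)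
qed

lemma T_roots: "card {x::'a. x ^ q = - x} \<le> q"
proof (rule card_roots_le[where pl = "monom 1 q + [:0,1:]"])
  have d: "degree (monom (1::'a) q + [:0,1:]) = q"
    using q2 by (subst degree_add_eq_left) (auto simp: degree_monom_eq)
  thus "monom (1::'a) q + [:0,1:] \<noteq> 0" using q2 by auto
  show "degree (monom (1::'a) q + [:0,1:]) \<le> q" using d by simp
  fix x :: 'a show "x ^ q = - x \<longleftrightarrow> poly (monom 1 q + [:0,1:]) x = 0"
    by (simp add: poly_monom eq_neg_iff_add_eq_0)
qed

lemma N_roots: "card {x::'a. x ^ (q+1) = 1} \<le> q + 1"
proof (rule card_roots_le[where pl = "monom 1 (q+1) + [:-1:]"])
  have d: "degree (monom (1::'a) (q+1) + [:-1:]) = q + 1"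
    using q2 by (subst degree_add_eq_left) (auto simp: degree_monom_eq)
  thus "monom (1::'a) (q+1) + [:-1:] \<noteq> 0" by auto
  show "degree (monom (1::'a) (q+1) + [:-1:]) \<le> q + 1" using d by simp
  fix x :: 'a show "x ^ (q+1) = 1 \<longleftrightarrow> poly (monom 1 (q+1) + [:-1:]) x = 0"
    by (simp add: poly_monom)
qed

lemma card_K_T: "card {x::'a. x ^ q = x} = q \<and> card {x::'a. x ^ q = - x} = q"
proof -
  define f where "f = (\<lambda>z::'a. z ^ q - z)"
  have img: "f ` UNIV \<subseteq> {x. x ^ q = - x}"
    by (auto simp: f_def frob_diff frob_frob)
  have fib: "card {x\<in>UNIV. f x = c} \<le> card {x::'a. x ^ q = x}" for c
  proof (cases "\<exists>z0. f z0 = c")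
    case True
    then obtain z0 where z0: "f z0 = c" by blast
    have "inj_on (\<lambda>z. z - z0) {x\<in>UNIV. f x = c}" by (auto simp: inj_on_def)
    moreover have "(\<lambda>z. z - z0) ` {x\<in>UNIV. f x = c} \<subseteq> {x::'a. x ^ q = x}"
      using z0 by (auto simp: f_def frob_diff algebra_simps)
    ultimately show ?thesis by (rule card_inj_on_le) simp
  next
    case False thus ?thesis by simp
  qed
  have "card (UNIV::'a set) \<le> card (f ` UNIV) * card {x::'a. x ^ q = x}"
    by (rule card_fibres_le[OF _ fib]) simp
  also have "\<dots> \<le> card {x::'a. x ^ q = - x} * card {x::'a. x ^ q = x}"
    by (rule mult_le_mono1) (rule card_mono[OF _ img], simp)
  finally have le: "q * q \<le> card {x::'a. x ^ q = - x} * card {x::'a. x ^ q = x}"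
    using card by (simp add: power2_eq_square)
  have a: "card {x::'a. x ^ q = x} \<le> q" by (rule K_roots)
  have b: "card {x::'a. x ^ q = - x} \<le> q" by (rule T_roots)
  define cK where "cK = card {x::'a. x ^ q = x}"
  define cT where "cT = card {x::'a. x ^ q = - x}"
  have le': "q * q \<le> cT * cK" using le by (simp add: cK_def cT_def)
  have a': "cK \<le> q" using a by (simp add: cK_def)
  have b': "cT \<le> q" using b by (simp add: cT_def)
  have "cK = q"
  proof (rule ccontr)
    assume "cK \<noteq> q" hence lt: "cK < q" using a' by simp
    have "cT * cK \<le> q * cK" by (rule mult_le_mono1[OF b'])
    also have "\<dots> < q * q" using lt q2 by simp
    finally show False using le' by simp
  qed
  moreover have "cT = q"
  proof (rule ccontr)
    assume "cT \<noteq> q" hence lt: "cT < q" using b' by simp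
    have "cT * cK \<le> cT * q" by (rule mult_le_mono2[OF a'])
    also have "\<dots> < q * q" using lt q2 by simp
    finally show False using le' by simp
  qed
  ultimately show ?thesis by (simp add: cK_def cT_def)
qed

lemma card_K: "card {x::'a. x ^ q = x} = q" using card_K_T by simp
lemma card_T: "card {x::'a. x ^ q = - x} = q" using card_K_T by simp

lemma norm_in_K: "((z::'a) ^ (q+1)) ^ q = z ^ (q+1)"
proof -
  have "(z ^ (q+1)) ^ q = (z^q)^q * z ^ q" by (simp add: power_mult_distrib power_add power_mult[symmetric])
  also have "\<dots> = z ^ (q+1)" by (simp add: frob_frob)
  finally show ?thesis .
qed

lemma sqrt_K:
  assumes "(t::'a) ^ q = t" "t \<noteq> 0"
  shows "\<exists>m. m ^ 2 = t"
proof -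
  define A where "A = (UNIV - {0::'a})"
  define Nf where "Nf = (\<lambda>z::'a. z ^ (q+1))"
  have img: "Nf ` A \<subseteq> {x::'a. x ^ q = x} - {0}"
    unfolding A_def Nf_def using norm_in_K by auto
  have fib: "card {x\<in>A. Nf x = c} \<le> q + 1" for c
  proof (cases "\<exists>z0\<in>A. Nf z0 = c")
    case True
    then obtain z0 where z0: "z0 \<in> A" "Nf z0 = c" by blast
    have "inj_on (\<lambda>z. z / z0) {x\<in>A. Nf x = c}" using z0 by (auto simp: inj_on_def A_def)
    moreover have "(\<lambda>z. z / z0) ` {x\<in>A. Nf x = c} \<subseteq> {x::'a. x ^ (q+1) = 1}"
      using z0 by (auto simp: Nf_def A_def power_divide)
    ultimately have "card {x\<in>A. Nf x = c} \<le> card {x::'a. x ^ (q+1) = 1}"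
      by (rule card_inj_on_le) simp
    thus ?thesis using N_roots by linarith
  next
    case False
    hence "{x\<in>A. Nf x = c} = {}" by blast
    thus ?thesis by (metis card.empty zero_le)
  qed
  have cA: "card A = q^2 - 1" using card by (simp add: A_def card_Diff_singleton)
  have le: "card A \<le> card (Nf ` A) * (q+1)"
    by (rule card_fibres_le[OF _ fib]) (simp add: A_def)
  have cK0: "card ({x::'a. x ^ q = x} - {0}) = q - 1"
    using card_K q2 by (simp add: card_Diff_singleton)
  have "(q - 1) * (q + 1) = q^2 - 1"
  proof -
    obtain r where r: "q = Suc r" using q2 by (cases q) auto
    show ?thesis unfolding r by (simp add: power2_eq_square)
  qed
  hence "(q - 1) * (q + 1) \<le> card (Nf ` A) * (q+1)" using le cA by simp
  hence ge: "q - 1 \<le> card (Nf ` A)" by (subst (asm) mult_le_cancel2) simp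
  have "Nf ` A = {x::'a. x ^ q = x} - {0}"
  proof (rule card_subset_eq[OF _ img])
    show "finite ({x::'a. x ^ q = x} - {0})" by simp
    have "card (Nf ` A) \<le> card ({x::'a. x ^ q = x} - {0})"
      by (rule card_mono[OF _ img]) simp
    thus "card (Nf ` A) = card ({x::'a. x ^ q = x} - {0})" using ge cK0 by linarith
  qed
  hence "t \<in> Nf ` A" using assms by auto
  then obtain z where z: "z ^ (q+1) = t" unfolding Nf_def by blast
  have "even (q+1)" using qodd by simp
  then obtain h where h: "q + 1 = 2 * h" by blast
  have "(z ^ h) ^ 2 = z ^ (q+1)" unfolding h by (simp only: power_mult[symmetric] mult.commute)
  hence "(z ^ h) ^ 2 = t" using z by simp
  thus ?thesis by blast
qed

end


context ufld begin

lemma pow_swap: "((x::'a) ^ m) ^ n = (x ^ n) ^ m"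
  by (simp only: power_mult[symmetric] mult.commute)

lemma K_add: "a ^ q = a \<Longrightarrow> b ^ q = b \<Longrightarrow> ((a::'a) + b) ^ q = a + b"
  by (simp add: frob_add)
lemma K_diff: "a ^ q = a \<Longrightarrow> b ^ q = b \<Longrightarrow> ((a::'a) - b) ^ q = a - b"
  by (simp add: frob_diff)
lemma K_mult: "a ^ q = a \<Longrightarrow> b ^ q = b \<Longrightarrow> ((a::'a) * b) ^ q = a * b"
  by (simp add: power_mult_distrib)
lemma K_div: "a ^ q = a \<Longrightarrow> b ^ q = b \<Longrightarrow> ((a::'a) / b) ^ q = a / b"
  by (simp add: power_divide)
lemma K_1: "(1::'a) ^ q = 1" by simp
lemma K_0: "(0::'a) ^ q = 0" using q2 by simp
lemma K_2: "(2::'a) ^ q = 2"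
  using K_add[OF K_1 K_1] by (simp add: one_add_one)

definition Kth :: "'a \<Rightarrow> bool" where "Kth y \<longleftrightarrow> (y / th) ^ q = y / th"

lemma thq_nz: "th ^ q \<noteq> 0" using thnz by simp

lemma Kth_iff: "Kth y \<longleftrightarrow> (\<exists>t. t ^ q = t \<and> y = t * th)"
proof
  assume "Kth y" thus "\<exists>t. t ^ q = t \<and> y = t * th"
    by (intro exI[of _ "y / th"]) (use thnz in \<open>auto simp: Kth_def\<close>)
next
  assume "\<exists>t. t ^ q = t \<and> y = t * th"
  thus "Kth y" using thnz by (auto simp: Kth_def)
qed

lemma Kth_alt: "Kth y \<longleftrightarrow> th * y ^ q = th ^ q * y"
  unfolding Kth_def using thnz thq_nz
  by (simp add: power_divide field_simps)

lemma Kth_add: "Kth a \<Longrightarrow> Kth b \<Longrightarrow> Kth (a + b)"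
  unfolding Kth_def by (simp add: add_divide_distrib frob_add)
lemma Kth_diff: "Kth a \<Longrightarrow> Kth b \<Longrightarrow> Kth (a - b)"
  unfolding Kth_def by (simp add: diff_divide_distrib frob_diff)
lemma Kth_0: "Kth 0" unfolding Kth_def using K_0 by simp
lemma Kth_th: "Kth th" unfolding Kth_def using thnz by simp
lemma Kth_scal: "t ^ q = t \<Longrightarrow> Kth (t * th)" by (auto simp: Kth_iff)

lemma nonsq: assumes "z \<noteq> 0" "Kth (z ^ 2)" shows False
proof -
  obtain t where t: "t ^ q = t" "z ^ 2 = t * th" using assms(2) by (auto simp: Kth_iff)
  have tnz: "t \<noteq> 0" using t assms(1) by auto
  have "(z ^ 2) ^ (q + 1) = t ^ (q+1) * th ^ (q+1)" using t by (simp add: power_mult_distrib)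
  also have "t ^ (q+1) = t ^ 2" using t by (simp add: power2_eq_square)
  finally have e: "(z ^ (q+1)) ^ 2 = t ^ 2 * th ^ (q+1)"
    using pow_swap[of z 2 "q+1"] by simp
  define s where "s = z ^ (q+1) / t"
  have "s ^ q = s" unfolding s_def by (rule K_div[OF norm_in_K t(1)])
  moreover have "s ^ 2 = th ^ (q+1)" unfolding s_def using e tnz
    by (simp add: power_divide)
  ultimately show False using nsq by blast
qed

definition gg :: "'a \<Rightarrow> 'a" where "gg z = th * (z ^ q) ^ 2 - th ^ q * z ^ 2"

lemma gg_T: "(gg z) ^ q = - gg z"
proof -
  have "(gg z) ^ q = (th * (z ^ q) ^ 2) ^ q - (th ^ q * z ^ 2) ^ q" by (simp add: gg_def frob_diff)
  also have "(th * (z ^ q) ^ 2) ^ q = th ^ q * z ^ 2"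
    by (simp add: power_mult_distrib pow_swap[of "z ^ q" 2 q] frob_frob)
  also have "(th ^ q * z ^ 2) ^ q = th * (z ^ q) ^ 2"
    by (simp add: power_mult_distrib pow_swap[of z 2 q] frob_frob)
  finally show ?thesis by (simp add: gg_def)
qed

lemma gg_iff: "Kth (z ^ 2 - b) \<longleftrightarrow> gg z = th * b ^ q - th ^ q * b"
  unfolding Kth_alt gg_def by (simp add: frob_diff power_mult[symmetric] mult.commute algebra_simps)

lemma gg_zero: "gg z = 0 \<longleftrightarrow> z = 0"
proof
  assume "gg z = 0"
  hence "Kth (z ^ 2 - 0)" using gg_iff[of z 0] K_0 by simp
  thus "z = 0" using nonsq by force
next
  assume "z = 0" thus "gg z = 0" using q2 by (simp add: gg_def)
qed

lemma F_le:
  assumes c: "c ^ q = - c" "c \<noteq> 0" and c': "c' ^ q = - c'" "c' \<noteq> 0"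
  shows "card {z. gg z = c} \<le> card {z. gg z = c'}"
proof -
  have r: "(c' / c) ^ q = c' / c" "c' / c \<noteq> 0" using c c' by (auto simp: power_divide)
  obtain m where m: "m ^ 2 = c' / c" using sqrt_K[OF r] by blast
  have mnz: "m \<noteq> 0" using m r by auto
  have mq: "(m ^ q) ^ 2 = m ^ 2" using m r pow_swap[of m q 2] by simp
  have gm: "gg (m * z) = m ^ 2 * gg z" for z
  proof -
    have "gg (m * z) = th * (m ^ q) ^ 2 * (z ^ q) ^ 2 - th ^ q * m ^ 2 * z ^ 2"
      unfolding gg_def by (simp add: power_mult_distrib)
    also have "\<dots> = m ^ 2 * gg z" unfolding mq gg_def by (simp add: algebra_simps)
    finally show ?thesis .
  qed
  have "inj_on (\<lambda>z. m * z) {z. gg z = c}" using mnz by (auto simp: inj_on_def)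
  moreover have "(\<lambda>z. m * z) ` {z. gg z = c} \<subseteq> {z. gg z = c'}"
    using gm m c by auto
  ultimately show ?thesis by (rule card_inj_on_le) simp
qed

lemma count_main:
  assumes "\<not> Kth b"
  shows "card {z. Kth (z ^ 2 - b)} = q + 1"
proof -
  define T where "T = {x::'a. x ^ q = - x}"
  define F where "F = (\<lambda>c. {z. gg z = c})"
  define c0 where "c0 = th * b ^ q - th ^ q * b"
  have c0T: "c0 ^ q = - c0" unfolding c0_def using thnz
    by (simp add: frob_diff power_mult_distrib frob_frob)
  have c0nz: "c0 \<noteq> 0" using assms unfolding c0_def Kth_alt by simp
  have eqF: "{z. Kth (z ^ 2 - b)} = F c0" unfolding F_def c0_def using gg_iff by auto
  have same: "card (F c) = card (F c0)" if "c \<in> T - {0}" for c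
    using F_le[of c c0] F_le[of c0 c] that c0T c0nz by (auto simp: T_def F_def)
  have U: "(UNIV::'a set) = (\<Union>c\<in>T. F c)" using gg_T by (auto simp: T_def F_def)
  have "card (UNIV::'a set) = (\<Sum>c\<in>T. card (F c))"
    unfolding U by (rule card_UN_disjoint) (auto simp: F_def)
  also have "\<dots> = card (F 0) + (\<Sum>c\<in>T - {0}. card (F c))"
    by (rule sum.remove) (use q2 in \<open>auto simp: T_def\<close>)
  also have "F 0 = {0}" using gg_zero by (auto simp: F_def)
  also have "(\<Sum>c\<in>T - {0}. card (F c)) = (\<Sum>c\<in>T - {0}. card (F c0))"
    by (rule sum.cong) (auto simp: same)
  also have "\<dots> = (q - 1) * card (F c0)"
    using card_T q2 by (simp add: T_def card_Diff_singleton)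
  finally have e: "q ^ 2 = 1 + (q - 1) * card (F c0)" using card by simp
  obtain r where r: "q = Suc r" using q2 by (cases q) auto
  have "r * (r + 2) = r * card (F c0)" using e unfolding r by (simp add: power2_eq_square algebra_simps)
  moreover have rnz: "r \<noteq> 0" using r q2 by simp
  ultimately have "r + 2 = card (F c0)" by (simp only: mult_left_cancel[OF rnz])
  hence "card (F c0) = r + 2" by simp
  thus ?thesis using eqF r by simp
qed

end


context ufld begin

abbreviation "UU \<equiv> U_theta q th"
abbreviation "BL \<equiv> blocks (\<lambda>x::'a. x ^ 2) q UU"

lemma memU_Aff: "Aff x y \<in> UU \<longleftrightarrow> Kth y"
  by (auto simp: U_theta_def Kth_iff)
lemma memU_Inf: "Inf None \<in> UU" by (simp add: U_theta_def)
lemma memU_InfS: "Inf (Some a) \<notin> UU" by (simp add: U_theta_def)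

lemma UN_eq: "UU \<inter> lineN a = {Aff a y | y. Kth y} \<union> {Inf None}"
  by (auto simp: lineN_def U_theta_def Kth_iff)

lemma card_UN: "card (UU \<inter> lineN a) = q + 1"
proof -
  have e: "{Aff a y | y. Kth y} = (\<lambda>t. Aff a (t * th)) ` {t. t ^ q = t}"
    by (auto simp: Kth_iff)
  have "inj_on (\<lambda>t. Aff a (t * th)) {t. t ^ q = t}" using thnz by (auto simp: inj_on_def)
  hence c: "card {Aff a y | y. Kth y} = q" unfolding e using card_K by (simp add: card_image)
  have f: "finite {Aff a y | y. Kth y}" unfolding e by simp
  show ?thesis unfolding UN_eq using c f by (subst card_Un_disjoint) auto
qed

lemma UInf_eq: "UU \<inter> lineInf = {Inf None}"
  by (auto simp: lineInf_def U_theta_def)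

lemma UL_eq: "UU \<inter> lineL (\<lambda>x. x ^ 2) a b = {Aff x ((x + a) ^ 2 - b) | x. Kth ((x + a) ^ 2 - b)}"
  by (auto simp: lineL_def U_theta_def Kth_iff)

lemma card_UL: "card (UU \<inter> lineL (\<lambda>x. x ^ 2) a b) = card {z. Kth (z ^ 2 - b)}"
proof -
  have e: "{Aff x ((x + a) ^ 2 - b) | x. Kth ((x + a) ^ 2 - b)} =
      (\<lambda>z. Aff (z - a) (z ^ 2 - b)) ` {z. Kth (z ^ 2 - b)}"
  proof (rule equalityI)
    show "{Aff x ((x + a) ^ 2 - b) | x. Kth ((x + a) ^ 2 - b)} \<subseteq>
      (\<lambda>z. Aff (z - a) (z ^ 2 - b)) ` {z. Kth (z ^ 2 - b)}"
    proof
      fix P assume "P \<in> {Aff x ((x + a) ^ 2 - b) | x. Kth ((x + a) ^ 2 - b)}"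
      then obtain x where "P = Aff x ((x + a) ^ 2 - b)" "Kth ((x + a) ^ 2 - b)" by blast
      thus "P \<in> (\<lambda>z. Aff (z - a) (z ^ 2 - b)) ` {z. Kth (z ^ 2 - b)}"
        by (intro image_eqI[of _ _ "x + a"]) auto
    qed
  qed auto
  have "inj_on (\<lambda>z. Aff (z - a) (z ^ 2 - b)) {z. Kth (z ^ 2 - b)}" by (auto simp: inj_on_def)
  thus ?thesis unfolding UL_eq e by (simp add: card_image)
qed

lemma card_UL_good: "\<not> Kth b \<Longrightarrow> card (UU \<inter> lineL (\<lambda>x. x ^ 2) a b) = q + 1"
  using card_UL count_main by simp

lemma card_UL_bad: assumes "Kth b" shows "card (UU \<inter> lineL (\<lambda>x. x ^ 2) a b) = 1"
proof -
  have "{z. Kth (z ^ 2 - b)} = {0}"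
  proof (rule equalityI)
    show "{z. Kth (z ^ 2 - b)} \<subseteq> {0}"
    proof
      fix z assume "z \<in> {z. Kth (z ^ 2 - b)}"
      hence "Kth (z ^ 2)" using Kth_add[OF _ assms, of "z^2 - b"] by simp
      thus "z \<in> {0}" using nonsq by force
    qed
  qed (use assms q2 frob_neg in \<open>auto simp: Kth_def\<close>)
  thus ?thesis using card_UL by simp
qed

lemma block_N: "UU \<inter> lineN a \<in> BL"
  unfolding blocks_def lines_def using card_UN by blast

lemma block_L: "\<not> Kth b \<Longrightarrow> UU \<inter> lineL (\<lambda>x. x ^ 2) a b \<in> BL"
  unfolding blocks_def lines_def using card_UL_good by blast

lemma block_cases:
  assumes "B \<in> BL"
  obtains (N) a where "B = UU \<inter> lineN a"
    | (L) a b where "B = UU \<inter> lineL (\<lambda>x. x ^ 2) a b" "card B = q + 1"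
proof -
  obtain l where l: "l \<in> lines (\<lambda>x. x ^ 2)" "B = UU \<inter> l" "card (UU \<inter> l) = q + 1"
    using assms unfolding blocks_def by blast
  show ?thesis
  proof (cases "l = lineInf")
    case True thus ?thesis using l UInf_eq q3 by simp
  next
    case False
    thus ?thesis using l that unfolding lines_def by blast
  qed
qed

lemma InfNone_notin_L: "Inf None \<notin> lineL f a b" by (simp add: lineL_def)

end


context ufld begin

lemma block_of: "l \<in> lines f \<Longrightarrow> card (U \<inter> l) = q + 1 \<Longrightarrow> U \<inter> l \<in> blocks f q U"
  unfolding blocks_def by blast
lemma block_card: "B \<in> blocks f q U \<Longrightarrow> card B = q + 1"
  unfolding blocks_def by auto
lemma lineL_in: "lineL f a b \<in> lines f" unfolding lines_def by blast

lemma Kth_shift: "Kth s \<Longrightarrow> Kth (y + s) \<longleftrightarrow> Kth y"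
  using Kth_add[of y s] Kth_diff[of "y + s" s] by auto

lemma inf_vertex: "strong_II_vertex (\<lambda>x. x ^ 2) q UU (Inf None)"
  unfolding strong_II_vertex_def
proof (intro conjI ballI impI)
  show "Inf None \<in> UU" by (rule memU_Inf)
next
  fix B C w
  assume B: "B \<in> BL" and C: "C \<in> BL" and w: "w \<in> C" and vB: "Inf None \<notin> B"
    and vC: "Inf None \<in> C" and BC: "B \<inter> C \<noteq> {}" and wv: "w \<noteq> Inf None" and wB: "w \<notin> B"
  obtain a b where Bab: "B = UU \<inter> lineL (\<lambda>x. x ^ 2) a b"
  proof (rule block_cases[OF B])
    fix a assume "B = UU \<inter> lineN a" thus ?thesis using vB memU_Inf by (simp add: lineN_def)
  next
    fix a b assume "B = UU \<inter> lineL (\<lambda>x. x ^ 2) a b" thus ?thesis using that by blast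
  qed
  obtain c where Cc: "C = UU \<inter> lineN c"
  proof (rule block_cases[OF C])
    fix a assume "C = UU \<inter> lineN a" thus ?thesis using that by blast
  next
    fix a b assume "C = UU \<inter> lineL (\<lambda>x. x ^ 2) a b" thus ?thesis using vC by (simp add: InfNone_notin_L)
  qed
  obtain P where P: "P \<in> B" "P \<in> C" using BC by blast
  obtain y1 where y1: "P = Aff c y1" "Kth y1" "y1 = (c + a) ^ 2 - b"
    using P unfolding Bab Cc by (auto simp: lineL_def lineN_def memU_Aff)
  obtain y2 where y2: "w = Aff c y2" "Kth y2"
    using w wv unfolding Cc by (auto simp: lineN_def memU_Aff)
  define s where "s = y2 - y1"
  have Ks: "Kth s" unfolding s_def using y1 y2 Kth_diff by simp
  define B' where "B' = UU \<inter> lineL (\<lambda>x. x ^ 2) a (b - s)"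
  have cB: "card B = q + 1" using B by (rule block_card)
  have eqz: "{z. Kth (z ^ 2 - (b - s))} = {z. Kth (z ^ 2 - b)}"
  proof (rule Collect_cong)
    fix z :: 'a
    have e: "z ^ 2 - (b - s) = (z ^ 2 - b) + s" by simp
    show "Kth (z ^ 2 - (b - s)) = Kth (z ^ 2 - b)" unfolding e by (rule Kth_shift[OF Ks])
  qed
  have cB': "card B' = q + 1" using cB unfolding B'_def Bab card_UL eqz .
  have B'bl: "B' \<in> BL" unfolding B'_def using cB'[unfolded B'_def] by (rule block_of[OF lineL_in])
  show "\<exists>B'\<in>BL. B' \<noteq> C \<and> w \<in> B' \<and>
           (\<forall>D\<in>BL. Inf None \<in> D \<longrightarrow> D \<inter> B \<noteq> {} \<longrightarrow> B' \<inter> D \<noteq> {})"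
  proof (intro bexI[OF _ B'bl] conjI ballI impI)
    show "B' \<noteq> C" using vC unfolding B'_def by (auto simp: InfNone_notin_L)
    show "w \<in> B'" unfolding B'_def y2 using y1 y2
      by (auto simp: lineL_def memU_Aff s_def)
  next
    fix D assume D: "D \<in> BL" "Inf None \<in> D" "D \<inter> B \<noteq> {}"
    obtain d where Dd: "D = UU \<inter> lineN d"
    proof (rule block_cases[OF D(1)])
      fix a assume "D = UU \<inter> lineN a" thus ?thesis using that by blast
    next
      fix a b assume "D = UU \<inter> lineL (\<lambda>x. x ^ 2) a b" thus ?thesis using D(2) by (simp add: InfNone_notin_L)
    qed
    obtain Q where Q: "Q \<in> D" "Q \<in> B" using D(3) by blast
    obtain y where y: "Q = Aff d y" "Kth y" "y = (d + a) ^ 2 - b"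
      using Q unfolding Bab Dd by (auto simp: lineL_def lineN_def memU_Aff)
    have "Aff d (y + s) \<in> B' \<inter> D"
      unfolding B'_def Dd using y Kth_add[OF y(2) Ks]
      by (auto simp: lineL_def lineN_def memU_Aff)
    thus "B' \<inter> D \<noteq> {}" by blast
  qed
qed

end


lemma key_algebra:
  fixes T T' A A' M M' :: "'a::field"
  assumes two: "(2::'a) \<noteq> 0" and Tnz: "T \<noteq> 0" and dM: "M \<noteq> M'"
  and c3: "2*T*A' - 2*T'*A = 0"
  and c2: "T*((1+2*A'*M') + 4*A'*M) - T'*((1+2*A*M) + 4*A*M') = 0"
  and c1: "T*(2*(1+2*A'*M')*M + 2*A'*M^2) - T'*(2*(1+2*A*M)*M' + 2*A*M'^2) = 0"
  and c0: "T*(1+2*A'*M')*M^2 - T'*(1+2*A*M)*M'^2 = 0"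
  shows False
proof -
  have "2*(T*A' - T'*A) = 0" using c3 by (simp add: algebra_simps)
  hence H3: "T*A' - T'*A = 0" using two by simp
  have i2: "T - T' + 2*T'*A*(M - M') = (T*((1+2*A'*M') + 4*A'*M) - T'*((1+2*A*M) + 4*A*M'))
       - (2*M' + 4*M)*(T*A' - T'*A)"
    by (simp add: algebra_simps)
  have E2: "T - T' + 2*T'*A*(M - M') = 0" using i2 c2 H3 by simp
  have i1: "2*(T*M - T'*M' + T'*A*(M^2 - M'^2)) = (T*(2*(1+2*A'*M')*M + 2*A'*M^2) - T'*(2*(1+2*A*M)*M' + 2*A*M'^2))
       - (4*M*M' + 2*M^2)*(T*A' - T'*A)"
    by (simp add: algebra_simps power2_eq_square)
  have E1: "2*(T*M - T'*M' + T'*A*(M^2 - M'^2)) = 0" using i1 c1 H3 by simp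
  have i0: "T*M^2 - T'*M'^2 + 2*T'*A*M*M'*(M - M') = (T*(1+2*A'*M')*M^2 - T'*(1+2*A*M)*M'^2)
       - 2*M'*M^2*(T*A' - T'*A)"
    by (simp add: algebra_simps power2_eq_square)
  have E0: "T*M^2 - T'*M'^2 + 2*T'*A*M*M'*(M - M') = 0" using i0 c0 H3 by simp
  have i4: "(T + T')*(M - M') = 2*(T*M - T'*M' + T'*A*(M^2 - M'^2)) - (M + M')*(T - T' + 2*T'*A*(M - M'))"
    by (simp add: algebra_simps power2_eq_square)
  have "(T + T')*(M - M') = 0" using i4 E1 E2 by simp
  hence "T + T' = 0" using dM by simp
  hence T': "T' = - T" by (simp add: add_eq_0_iff)
  have i5: "T*(M - M')^2 = (T*M^2 - T'*M'^2 + 2*T'*A*M*M'*(M - M')) - M*M'*(T - T' + 2*T'*A*(M - M'))"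
    unfolding T' by (simp add: algebra_simps power2_eq_square)
  have "T*(M - M')^2 = 0" using i5 E0 E2 by simp
  thus False using Tnz dM by simp
qed

context ufld begin

lemma poly_key:
  assumes "\<not> Kth (1 + 2 * al)"
  shows "\<exists>y. y \<noteq> 0 \<and> Kth (1 + 2 * al + th * y) \<and> \<not> Kth ((1 + 2 * al * y) / y ^ 2)"
proof (rule ccontr)
  assume H: "\<not> ?thesis"
  define m where "m = - (1 + 2 * al) / th"
  have mK: "m ^ q \<noteq> m"
  proof
    assume "m ^ q = m"
    hence "(- m) ^ q = - m" by (simp add: frob_neg)
    moreover have "1 + 2 * al = (- m) * th" unfolding m_def using thnz by simp
    ultimately show False using assms Kth_scal by metis
  qed
  define T where "T = th" define T' where "T' = th ^ q"
  define A where "A = al" define A' where "A' = al ^ q"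
  define M where "M = m" define M' where "M' = m ^ q"
  define c3 where "c3 = 2*T*A' - 2*T'*A"
  define c2 where "c2 = T*((1+2*A'*M') + 4*A'*M) - T'*((1+2*A*M) + 4*A*M')"
  define c1 where "c1 = T*(2*(1+2*A'*M')*M + 2*A'*M^2) - T'*(2*(1+2*A*M)*M' + 2*A*M'^2)"
  define c0 where "c0 = T*(1+2*A'*M')*M^2 - T'*(1+2*A*M)*M'^2"
  define pl where "pl = [:c0, c1, c2, c3:]"
  have root: "poly pl k = 0" if kK: "k ^ q = k" for k
  proof -
    define y where "y = m + k"
    have ynz: "y \<noteq> 0"
    proof
      assume "y = 0" hence "m = - k" unfolding y_def by (simp add: eq_neg_iff_add_eq_0)
      hence "m ^ q = m" using kK by (simp add: frob_neg)
      thus False using mK by simp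
    qed
    have yq: "y ^ q = m ^ q + k" unfolding y_def using kK by (simp add: frob_add)
    have yqnz: "y ^ q \<noteq> 0" using ynz by simp
    have "1 + 2 * al + th * y = k * th" unfolding y_def m_def using thnz by (simp add: field_simps)
    hence K1: "Kth (1 + 2 * al + th * y)" using Kth_scal[OF kK] by simp
    have KY: "Kth ((1 + 2 * al * y) / y ^ 2)" using H ynz K1 by blast
    have Yq: "((1 + 2 * al * y) / y ^ 2) ^ q = (1 + 2 * al ^ q * y ^ q) / (y ^ q) ^ 2"
      by (simp add: power_divide frob_add power_mult_distrib K_2 pow_swap[of y 2 q])
    have "th * ((1 + 2 * al ^ q * y ^ q) / (y ^ q) ^ 2) = th ^ q * ((1 + 2 * al * y) / y ^ 2)"
      using KY unfolding Kth_alt Yq .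
    hence e: "th * (1 + 2 * al ^ q * y ^ q) * y ^ 2 = th ^ q * (1 + 2 * al * y) * (y ^ q) ^ 2"
      using ynz yqnz by (simp add: field_simps)
    have "poly pl k = T*(1 + 2*A'*(M' + k))*(M + k)^2 - T'*(1 + 2*A*(M + k))*(M' + k)^2"
      unfolding pl_def c0_def c1_def c2_def c3_def
      by (simp add: algebra_simps power2_eq_square)
    also have "\<dots> = th * (1 + 2 * al ^ q * y ^ q) * y ^ 2 - th ^ q * (1 + 2 * al * y) * (y ^ q) ^ 2"
      unfolding T_def T'_def A_def A'_def M_def M'_def yq unfolding y_def by (rule refl)
    also have "\<dots> = 0" using e by simp
    finally show ?thesis .
  qed
  have "pl = 0"
  proof (rule ccontr)
    assume nz: "pl \<noteq> 0"
    have "degree pl \<le> 3" unfolding pl_def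
      using degree_pCons_le[of c0 "[:c1, c2, c3:]"] degree_pCons_le[of c1 "[:c2, c3:]"]
            degree_pCons_le[of c2 "[:c3:]"] by simp
    moreover have "card {x. poly pl x = 0} \<le> degree pl" by (rule card_poly_roots_bound[OF nz])
    moreover have "card {x::'a. x ^ q = x} \<le> card {x. poly pl x = 0}"
      by (rule card_mono) (use root poly_roots_finite[OF nz] in auto)
    ultimately show False using card_K q3 by simp
  qed
  hence "c0 = 0" "c1 = 0" "c2 = 0" "c3 = 0" unfolding pl_def by simp_all
  thus False using key_algebra[OF two_nz thnz, of M M' A' T' A] mK
    unfolding c0_def c1_def c2_def c3_def T_def M_def M'_def by auto
qed

end


lemma disj_alg:
  fixes x d x0 y0 a b th :: "'a::field"
  assumes "(x + (d - x0))^2 - (d^2 - y0) = (x + a)^2 - b" "(x0 + a)^2 - b = y0 + th"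
  shows "2*(d - (x0+a))*(x - x0) = th"
proof -
  have b: "b = (x0 + a)^2 - y0 - th" using assms(2) by (simp add: algebra_simps)
  show ?thesis using assms(1) unfolding b by (simp add: algebra_simps power2_eq_square)
qed

context ufld begin

lemma aff_not_vertex:
  assumes y0: "Kth y0"
  shows "\<not> strong_II_vertex (\<lambda>x. x ^ 2) q UU (Aff x0 y0)"
proof
  assume S: "strong_II_vertex (\<lambda>x. x ^ 2) q UU (Aff x0 y0)"
  define v where "v = Aff x0 y0"
  define B where "B = UU \<inter> lineN (x0 + 1)"
  define C where "C = UU \<inter> lineN x0"
  define w where "w = Aff x0 (y0 + th)"
  have Kw: "Kth (y0 + th)" using Kth_add[OF y0 Kth_th] .
  have Bb: "B \<in> BL" unfolding B_def by (rule block_N)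
  have Cb: "C \<in> BL" unfolding C_def by (rule block_N)
  have wC: "w \<in> C" unfolding w_def C_def using Kw by (simp add: memU_Aff lineN_def)
  have vB: "v \<notin> B" unfolding v_def B_def by (simp add: lineN_def)
  have vC: "v \<in> C" unfolding v_def C_def using y0 by (simp add: memU_Aff lineN_def)
  have BC: "B \<inter> C \<noteq> {}" unfolding B_def C_def using memU_Inf by (auto simp: lineN_def)
  have wv: "w \<noteq> v" unfolding w_def v_def using thnz by simp
  have wB: "w \<notin> B" unfolding w_def B_def by (simp add: lineN_def)
  obtain B' where B': "B' \<in> BL" "B' \<noteq> C" "w \<in> B'"
    and all: "\<And>D. D \<in> BL \<Longrightarrow> v \<in> D \<Longrightarrow> D \<inter> B \<noteq> {} \<Longrightarrow> B' \<inter> D \<noteq> {}"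
    using S Bb Cb wC vB vC BC wv wB unfolding strong_II_vertex_def v_def[symmetric] by metis
  obtain a b where B'ab: "B' = UU \<inter> lineL (\<lambda>x. x ^ 2) a b" "card B' = q + 1"
  proof (rule block_cases[OF B'(1)])
    fix c assume Bc: "B' = UU \<inter> lineN c"
    hence "c = x0" using B'(3) unfolding w_def by (simp add: lineN_def)
    thus ?thesis using Bc B'(2) unfolding C_def by simp
  next
    fix a b assume "B' = UU \<inter> lineL (\<lambda>x. x ^ 2) a b" "card B' = q + 1"
    thus ?thesis using that by blast
  qed
  have wl: "(x0 + a) ^ 2 - b = y0 + th"
    using B'(3) unfolding B'ab w_def by (auto simp: lineL_def)
  define al where "al = x0 + a"
  have alnz: "al \<noteq> 0"
  proof
    assume "al = 0"
    moreover have "b = (x0 + a)^2 - (y0 + th)" by (simp add: wl[symmetric])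
    ultimately have "b = - (y0 + th)" unfolding al_def by simp
    hence "Kth b" using Kth_diff[OF Kth_0 Kw] by simp
    thus False using card_UL_bad[of b a] B'ab q3 by simp
  qed
  define D where "D = (\<lambda>d. UU \<inter> lineL (\<lambda>x. x ^ 2) (d - x0) (d ^ 2 - y0))"
  have Dbl: "D d \<in> BL" if "d \<noteq> 0" for d
  proof -
    have "\<not> Kth (d ^ 2 - y0)"
    proof
      assume "Kth (d ^ 2 - y0)"
      hence "Kth (d ^ 2)" using Kth_add[OF _ y0, of "d^2 - y0"] by simp
      thus False using nonsq that by blast
    qed
    thus ?thesis unfolding D_def by (rule block_L)
  qed
  have vD: "v \<in> D d" for d unfolding D_def v_def using y0
    by (auto simp: memU_Aff lineL_def intro!: exI[of _ x0])
  have DB: "D d \<inter> B \<noteq> {}" if "Kth (1 + 2 * d)" for d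
  proof -
    have e: "(x0 + 1 + (d - x0)) ^ 2 - (d ^ 2 - y0) = (1 + 2 * d) + y0"
      by (simp add: algebra_simps power2_eq_square)
    define yv where "yv = (x0 + 1 + (d - x0)) ^ 2 - (d ^ 2 - y0)"
    have Kyv: "Kth yv" unfolding yv_def e by (rule Kth_add[OF that y0])
    have m1: "Aff (x0 + 1) yv \<in> lineL (\<lambda>x. x ^ 2) (d - x0) (d ^ 2 - y0)"
      unfolding lineL_def yv_def by blast
    have m2: "Aff (x0 + 1) yv \<in> UU" using Kyv by (simp add: memU_Aff)
    have m3: "Aff (x0 + 1) yv \<in> lineN (x0 + 1)" unfolding lineN_def by blast
    have "Aff (x0 + 1) yv \<in> D d \<inter> B" unfolding D_def B_def using m1 m2 m3 by blast
    thus ?thesis by blast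
  qed
  have common: "2 * (d - al) * (x - x0) = th \<and> Kth ((x + (d - x0)) ^ 2 - (d ^ 2 - y0))"
    if "Aff x yv \<in> B' \<inter> D d" for d x yv
  proof -
    have h1: "yv = (x + (d - x0)) ^ 2 - (d ^ 2 - y0)" "yv = (x + a) ^ 2 - b" "Kth yv"
      using that unfolding B'ab D_def by (auto simp: lineL_def memU_Aff)
    have "2 * (d - (x0 + a)) * (x - x0) = th" by (rule disj_alg) (use h1 wl in simp_all)
    thus ?thesis using h1 unfolding al_def by simp
  qed
  have disj_gen: "B' \<inter> D d = {}" if "\<And>x. 2 * (d - al) * (x - x0) = th \<Longrightarrow>
        \<not> Kth ((x + (d - x0)) ^ 2 - (d ^ 2 - y0))" for d
  proof (rule ccontr)
    assume "B' \<inter> D d \<noteq> {}"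
    then obtain P where P: "P \<in> B' \<inter> D d" by blast
    then obtain x yv where "P = Aff x yv" unfolding B'ab D_def by (auto simp: lineL_def memU_InfS)
    thus False using common[of x yv d] P that by blast
  qed
  show False
  proof (cases "Kth (1 + 2 * al)")
    case True
    have "B' \<inter> D al = {}" by (rule disj_gen) (use thnz in simp)
    moreover have "B' \<inter> D al \<noteq> {}" by (rule all[OF Dbl[OF alnz] vD DB[OF True]])
    ultimately show False by simp
  next
    case False
    obtain y where y: "y \<noteq> 0" "Kth (1 + 2 * al + th * y)" "\<not> Kth ((1 + 2 * al * y) / y ^ 2)"
      using poly_key[OF False] by blast
    define d where "d = al + th * y / 2"
    have e1: "1 + 2 * d = 1 + 2 * al + th * y" unfolding d_def using two_nz by (simp add: field_simps)
    have Kd: "Kth (1 + 2 * d)" unfolding e1 by (rule y(2))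
    have dnz: "d \<noteq> 0"
    proof
      assume "d = 0" hence "Kth (1 ^ 2)" using Kd by simp
      thus False using nonsq[of 1] by simp
    qed
    have "B' \<inter> D d = {}"
    proof (rule disj_gen)
      fix x assume h: "2 * (d - al) * (x - x0) = th"
      have "th * y * (x - x0) = th" using h unfolding d_def using two_nz by (simp add: field_simps)
      hence "th * (y * (x - x0) - 1) = 0" by (simp add: algebra_simps)
      hence "y * (x - x0) = 1" using thnz by simp
      hence xe: "x - x0 = 1 / y" using y(1) by (simp add: field_simps)
      have x: "x = x0 + 1 / y" using xe by (simp add: algebra_simps)
      have d2: "2 * d = 2 * al + th * y" unfolding d_def using two_nz by (simp add: field_simps)
      have "(x + (d - x0)) ^ 2 - (d ^ 2 - y0) = (x - x0) ^ 2 + (2 * d) * (x - x0) + y0"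
        by (simp add: algebra_simps power2_eq_square)
      also have "\<dots> = (1 / y) ^ 2 + (2 * al + th * y) * (1 / y) + y0" unfolding xe d2 ..
      also have "\<dots> = (1 + 2 * al * y) / y ^ 2 + th + y0" using y(1)
        by (simp add: field_simps power2_eq_square)
      finally have val: "(x + (d - x0)) ^ 2 - (d ^ 2 - y0) = (1 + 2 * al * y) / y ^ 2 + th + y0" .
      show "\<not> Kth ((x + (d - x0)) ^ 2 - (d ^ 2 - y0))"
      proof
        assume "Kth ((x + (d - x0)) ^ 2 - (d ^ 2 - y0))"
        hence "Kth ((1 + 2 * al * y) / y ^ 2 + th + y0)" unfolding val .
        hence "Kth (((1 + 2 * al * y) / y ^ 2 + th + y0) - (th + y0))"
          using Kth_diff Kth_add[OF Kth_th y0] by blast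
        thus False using y(3) by simp
      qed
    qed
    moreover have "B' \<inter> D d \<noteq> {}" by (rule all[OF Dbl[OF dnz] vD DB[OF Kd]])
    ultimately show False by simp
  qed
qed

lemma main: "{v. strong_II_vertex (\<lambda>x. x ^ 2) q UU v} = {Inf None}"
proof (rule equalityI; rule subsetI)
  fix v :: "'a pt" assume "v \<in> {v. strong_II_vertex (\<lambda>x. x ^ 2) q UU v}"
  hence S: "strong_II_vertex (\<lambda>x. x ^ 2) q UU v" by simp
  hence vU: "v \<in> UU" unfolding strong_II_vertex_def by blast
  show "v \<in> {Inf None}"
  proof (cases v)
    case (Aff x y)
    hence "Kth y" using vU by (simp add: memU_Aff)
    thus ?thesis using aff_not_vertex S Aff by blast
  next
    case (Inf z)
    thus ?thesis using vU by (cases z) (auto simp: memU_InfS)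
  qed
next
  fix v :: "'a pt" assume "v \<in> {Inf None}"
  thus "v \<in> {v. strong_II_vertex (\<lambda>x. x ^ 2) q UU v}" using inf_vertex by simp
qed

end

theorem theorem3p9:
  fixes q :: nat and \<theta> :: "'a::{field,finite}"
  assumes "\<exists>p k. prime (p::nat) \<and> k \<ge> 1 \<and> q = p ^ k"
    and "odd q" and "q > 3"
    and "card (UNIV :: 'a set) = q ^ 2"
    and "\<theta> \<noteq> 0"
    and "\<not> (\<exists>s::'a. s ^ q = s \<and> s ^ 2 = \<theta> ^ (q + 1))"
  shows "{v. strong_II_vertex (\<lambda>x. x ^ 2) q (U_theta q \<theta>) v} = {Inf None}"
proof -
  obtain p k where pk: "prime p" "k \<ge> 1" "q = p ^ k" using assms(1) by blast
  interpret ufld q p k \<theta>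
    by unfold_locales (use pk assms(2-6) in auto)
  show ?thesis by (rule main)
qed

end
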